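(* For any graph $G$ and integers $k\ge 2$, $r\ge 3$, $R_r(\mathcal{B}(G),k)\le R(G,k)+r-2$, where $R(G,k)$ is the classical $k$-color Ramsey number of $G$.
   Context: For a graph $G$, a hypergraph $H$ is a Berge-$G$ hypergraph if there are an injective map $\phi:V(G)\to V(H)$ and pairwise distinct hyperedges $e_{xy}\in E(H)$, one for each $xy\in E(G)$, with $\phi(x),\phi(y)\in e_{xy}$. $\mathcal{B}(G)$ denotes the family of all Berge-$G$ hypergraphs. For a family $\mathcal{H}$ of $r$-uniform hypergraphs, $R_r(\mathcal{H},k)$ is the smallest $n$ such that every $k$-coloring of the hyperedges of the complete $r$-uniform hypergraph $K_n^r$ contains a monochromatic subhypergraph belonging to $\mathcal{H}$. $R(G,k)$ is the smallest $n$ such that every $k$-coloring of the edges of $K_n$ contains a monochromatic copy of $G$. *)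

theory Defs
  imports Main
begin

definition graph :: "'a set \<Rightarrow> 'a set set \<Rightarrow> bool" where
  "graph V E \<longleftrightarrow> finite V \<and> (\<forall>e\<in>E. e \<subseteq> V \<and> card e = 2)"

definition berge :: "'a set \<Rightarrow> 'a set set \<Rightarrow> 'b set \<Rightarrow> 'b set set \<Rightarrow> bool" where
  "berge V E HV HE \<longleftrightarrow>
     (\<exists>\<phi> f. inj_on \<phi> V \<and> \<phi> ` V \<subseteq> HV \<and> inj_on f E \<and> f ` E \<subseteq> HE \<and>
            (\<forall>e\<in>E. \<phi> ` e \<subseteq> f e))"

definition graph_ramsey :: "'a set \<Rightarrow> 'a set set \<Rightarrow> nat \<Rightarrow> nat" where
  "graph_ramsey V E k = (LEAST n::nat.
     \<forall>c :: nat set \<Rightarrow> nat.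
       (\<forall>e. e \<subseteq> {0..<n} \<and> card e = 2 \<longrightarrow> c e < k) \<longrightarrow>
       (\<exists>i<k. \<exists>\<phi>. inj_on \<phi> V \<and> \<phi> ` V \<subseteq> {0..<n} \<and> (\<forall>e\<in>E. c (\<phi> ` e) = i)))"

definition berge_ramsey :: "nat \<Rightarrow> 'a set \<Rightarrow> 'a set set \<Rightarrow> nat \<Rightarrow> nat" where
  "berge_ramsey r V E k = (LEAST n::nat.
     \<forall>c :: nat set \<Rightarrow> nat.
       (\<forall>e. e \<subseteq> {0..<n} \<and> card e = r \<longrightarrow> c e < k) \<longrightarrow>
       (\<exists>i<k. \<exists>HV HE. HV \<subseteq> {0..<n} \<and>
            HE \<subseteq> {e. e \<subseteq> HV \<and> card e = r \<and> c e = i} \<and> berge V E HV HE))"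

end

theory Submission
  imports Defs "HOL-Library.Ramsey"
begin

lemma graph_ramsey_exists:
  fixes V :: "'a set" and E :: "'a set set" and k :: nat
  assumes "graph V E"
  shows "\<exists>n::nat. \<forall>c :: nat set \<Rightarrow> nat.
       (\<forall>e. e \<subseteq> {0..<n} \<and> card e = 2 \<longrightarrow> c e < k) \<longrightarrow>
       (\<exists>i<k. \<exists>\<phi>. inj_on \<phi> V \<and> \<phi> ` V \<subseteq> {0..<n} \<and> (\<forall>e\<in>E. c (\<phi> ` e) = i))"
proof -
  have finV: "finite V" and Esub: "\<And>e. e \<in> E \<Longrightarrow> e \<subseteq> V \<and> card e = 2"
    using assms by (auto simp: graph_def)
  obtain N :: nat where N: "partn_lst {..<N} (replicate k (card V)) 2"
    using ramsey_full by blast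
  show ?thesis
  proof (rule exI[of _ N], intro allI impI)
    fix c :: "nat set \<Rightarrow> nat"
    assume c: "\<forall>e. e \<subseteq> {0..<N} \<and> card e = 2 \<longrightarrow> c e < k"
    have "c \<in> nsets {..<N} 2 \<rightarrow> {..<k}"
      using c by (auto simp: nsets_def atLeast0LessThan)
    then obtain i H where i: "i < length (replicate k (card V))"
      and H: "H \<in> nsets {..<N} (replicate k (card V) ! i)" and mono: "c ` (nsets H 2) \<subseteq> {i}"
      using partn_lstE[OF N] by (metis length_replicate)
    have ik: "i < k" using i by simp
    have H': "H \<subseteq> {..<N}" "finite H" "card H = card V"
      using H ik by (auto simp: nsets_def)
    obtain \<phi> where bij: "bij_betw \<phi> V H"
      using finite_same_card_bij[OF finV H'(2)] H'(3) by metis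
    have "\<forall>e\<in>E. c (\<phi> ` e) = i"
    proof
      fix e assume e: "e \<in> E"
      have "e \<subseteq> V" "card e = 2" using Esub[OF e] by auto
      moreover have "inj_on \<phi> e" using bij \<open>e \<subseteq> V\<close> by (meson bij_betw_def inj_on_subset)
      moreover have "finite e" using \<open>card e = 2\<close> by (metis card.infinite zero_neq_numeral)
      ultimately have "\<phi> ` e \<in> nsets H 2"
        using bij by (auto simp: nsets_def card_image bij_betw_def)
      then show "c (\<phi> ` e) = i" using mono by auto
    qed
    moreover have "\<phi> ` V \<subseteq> {0..<N}" using bij H'(1) by (auto simp: bij_betw_def)
    ultimately show "\<exists>i<k. \<exists>\<phi>. inj_on \<phi> V \<and> \<phi> ` V \<subseteq> {0..<N} \<and> (\<forall>e\<in>E. c (\<phi> ` e) = i)"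
      using ik bij by (auto simp: bij_betw_def)
  qed
qed

theorem corollary1:
  fixes V :: "'a set" and E :: "'a set set" and k r :: nat
  assumes "graph V E" and "k \<ge> 2" and "r \<ge> 3"
  shows "berge_ramsey r V E k \<le> graph_ramsey V E k + r - 2"
proof -
  define P where "P = (\<lambda>n::nat. \<forall>c :: nat set \<Rightarrow> nat.
       (\<forall>e. e \<subseteq> {0..<n} \<and> card e = 2 \<longrightarrow> c e < k) \<longrightarrow>
       (\<exists>i<k. \<exists>\<phi>. inj_on \<phi> V \<and> \<phi> ` V \<subseteq> {0..<n} \<and> (\<forall>e\<in>E. c (\<phi> ` e) = i)))"
  define N where "N = graph_ramsey V E k"
  have PN: "P N" unfolding N_def graph_ramsey_def P_def[symmetric]
    using graph_ramsey_exists[OF assms(1), of k] unfolding P_def[symmetric]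
    by (metis LeastI_ex)
  have Esub: "\<And>e. e \<in> E \<Longrightarrow> e \<subseteq> V \<and> card e = 2"
    using assms(1) by (auto simp: graph_def)
  define n where "n = N + r - 2"
  define B where "B = {N..<n}"
  have cardB: "card B = r - 2" using assms(3) by (simp add: B_def n_def)
  have Bn: "B \<subseteq> {0..<n}" by (auto simp: B_def)
  have "\<forall>c :: nat set \<Rightarrow> nat.
       (\<forall>e. e \<subseteq> {0..<n} \<and> card e = r \<longrightarrow> c e < k) \<longrightarrow>
       (\<exists>i<k. \<exists>HV HE. HV \<subseteq> {0..<n} \<and>
            HE \<subseteq> {e. e \<subseteq> HV \<and> card e = r \<and> c e = i} \<and> berge V E HV HE)"
  proof (intro allI impI)
    fix c :: "nat set \<Rightarrow> nat"
    assume c: "\<forall>e. e \<subseteq> {0..<n} \<and> card e = r \<longrightarrow> c e < k"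
    have key: "\<And>e. e \<subseteq> {0..<N} \<Longrightarrow> card e = 2 \<Longrightarrow> e \<union> B \<subseteq> {0..<n} \<and> card (e \<union> B) = r"
    proof -
      fix e :: "nat set" assume e: "e \<subseteq> {0..<N}" "card e = 2"
      have fe: "finite e" using e(1) finite_subset by blast
      have d: "e \<inter> B = {}" using e(1) by (auto simp: B_def)
      have "card (e \<union> B) = card e + card B"
        using card_Un_disjoint[OF fe _ d] by (simp add: B_def)
      then show "e \<union> B \<subseteq> {0..<n} \<and> card (e \<union> B) = r"
        using e cardB assms(3) Bn by (auto simp: n_def)
    qed
    define c' where "c' = (\<lambda>e. c (e \<union> B))"
    have "\<forall>e. e \<subseteq> {0..<N} \<and> card e = 2 \<longrightarrow> c' e < k"
      using key c by (auto simp: c'_def)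
    from PN[unfolded P_def, THEN spec[of _ c'], THEN mp, OF this] obtain i \<phi> where i: "i < k" and inj: "inj_on \<phi> V" and im: "\<phi> ` V \<subseteq> {0..<N}"
      and col: "\<forall>e\<in>E. c' (\<phi> ` e) = i"
      by blast
    define f where "f = (\<lambda>e. \<phi> ` e \<union> B)"
    have pe: "\<And>e. e \<in> E \<Longrightarrow> \<phi> ` e \<subseteq> {0..<N} \<and> card (\<phi> ` e) = 2"
      using Esub im inj by (auto simp: card_image inj_on_subset)
    have injf: "inj_on f E"
    proof (rule inj_onI)
      fix x y assume xy: "x \<in> E" "y \<in> E" "f x = f y"
      have "\<phi> ` x = \<phi> ` y"
      proof -
        have "\<phi> ` x = f x \<inter> {0..<N}" using pe[OF xy(1)] by (auto simp: f_def B_def)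
        also have "\<dots> = f y \<inter> {0..<N}" using xy(3) by simp
        also have "\<dots> = \<phi> ` y" using pe[OF xy(2)] by (auto simp: f_def B_def)
        finally show ?thesis .
      qed
      then show "x = y" using inj Esub xy(1,2) by (meson inj_on_image_eq_iff)
    qed
    have lt: "\<forall>x\<in>V. \<phi> x < n" using im assms(3) by (auto simp: n_def)
    have "berge V E {0..<n} (f ` E)"
      unfolding berge_def
      using inj lt injf by (intro exI[of _ \<phi>] exI[of _ f]) (auto simp: f_def n_def)
    moreover have "f ` E \<subseteq> {e. e \<subseteq> {0..<n} \<and> card e = r \<and> c e = i}"
    proof
      fix x assume "x \<in> f ` E"
      then obtain e where e: "e \<in> E" "x = \<phi> ` e \<union> B" by (auto simp: f_def)
      have "\<phi> ` e \<subseteq> {0..<N}" "card (\<phi> ` e) = 2" using pe[OF e(1)] by auto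
      from key[OF this] col e show "x \<in> {e. e \<subseteq> {0..<n} \<and> card e = r \<and> c e = i}"
        by (auto simp: c'_def)
    qed
    ultimately show "\<exists>i<k. \<exists>HV HE. HV \<subseteq> {0..<n} \<and>
            HE \<subseteq> {e. e \<subseteq> HV \<and> card e = r \<and> c e = i} \<and> berge V E HV HE"
      using i by blast
  qed
  then have "berge_ramsey r V E k \<le> n"
    unfolding berge_ramsey_def by (rule Least_le)
  then show ?thesis by (simp add: n_def N_def)
qed

end
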